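(* Let $\mathfrak{g}=\mathfrak{sl}_2(\mathbb{C})$. For every integer $n\ge1$, \[S^{\mathfrak{g}}_{2n}(\mathfrak{g},\mathfrak{g})=0\quad\text{and}\quad S^{\mathfrak{g}}_{2n+1}(\mathfrak{g},\mathfrak{g})=\mathbb{C}\,B^{\mathfrak{g}}_n.\]
   Context: $S^{\mathfrak{g}}_m(\mathfrak{g},\mathfrak{g})$ denotes the space of symmetric $\mathbb{C}$-multilinear maps $B:\mathfrak{g}^m\to\mathfrak{g}$ that are invariant: $[y,B(x_1,\ldots,x_m)]=\sum_{i=1}^mB(x_1,\ldots,[y,x_i],\ldots,x_m)$ for all $y,x_1,\ldots,x_m\in\mathfrak{g}$. Let $\langle\cdot,\cdot\rangle$ be the symmetric bilinear form on $\mathfrak{g}$ with $\langle x,x\rangle=\frac12\mathrm{tr}(\mathrm{ad}_x^2)$. For $n\ge1$ let $P_n(x_1,\ldots,x_{2n})=\frac{1}{(2n)!}\sum_{\sigma\in S_{2n}}\langle x_{\sigma(1)},x_{\sigma(2)}\rangle\cdots\langle x_{\sigma(2n-1)},x_{\sigma(2n)}\rangle$, and $B^{\mathfrak{g}}_n(x_1,\ldots,x_{2n+1})=\sum_{k=1}^{2n+1}P_n(x_1,\ldots,\hat{x}_k,\ldots,x_{2n+1})\,x_k$ (hat denotes omission). *)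

theory Defs
  imports "HOL-Analysis.Analysis"
begin

type_synonym mat2 = "complex^2^2"

definition mtrace :: "mat2 \<Rightarrow> complex" where
  "mtrace A = A$1$1 + A$2$2"

definition sl2 :: "mat2 set" where
  "sl2 = {A. mtrace A = 0}"

definition lie :: "mat2 \<Rightarrow> mat2 \<Rightarrow> mat2" where
  "lie x y = x ** y - y ** x"

definition smul :: "complex \<Rightarrow> mat2 \<Rightarrow> mat2" where
  "smul c A = (\<chi> i j. c * A$i$j)"

definition Ee :: mat2 where "Ee = (\<chi> i j. if i = 1 \<and> j = 2 then 1 else 0)"
definition Ff :: mat2 where "Ff = (\<chi> i j. if i = 2 \<and> j = 1 then 1 else 0)"
definition Hh :: mat2 where
  "Hh = (\<chi> i j. if i = j then (if i = 1 then 1 else -1) else 0)"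

text \<open>Trace of an endomorphism T of sl_2, computed as the trace of its matrix in
the basis (e,f,h): the coordinates of a traceless A are (A12, A21, A11).\<close>
definition tr_g :: "(mat2 \<Rightarrow> mat2) \<Rightarrow> complex" where
  "tr_g T = (T Ee)$1$2 + (T Ff)$2$1 + (T Hh)$1$1"

definition form :: "mat2 \<Rightarrow> mat2 \<Rightarrow> complex" where
  "form x y = tr_g (\<lambda>z. lie x (lie y z)) / 2"

text \<open>m-linear maps g^m -> g are represented as functions on lists; they are
normalised to be 0 on lists not of length m with entries in sl_2.\<close>
definition dom_g :: "nat \<Rightarrow> mat2 list set" where
  "dom_g m = {xs. length xs = m \<and> set xs \<subseteq> sl2}"

definition S_inv :: "nat \<Rightarrow> (mat2 list \<Rightarrow> mat2) set" where
  "S_inv m = {B.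
     (\<forall>xs. xs \<notin> dom_g m \<longrightarrow> B xs = 0) \<and>
     (\<forall>xs \<in> dom_g m. B xs \<in> sl2) \<and>
     (\<forall>xs \<in> dom_g m. \<forall>i<m. \<forall>x\<in>sl2. \<forall>y\<in>sl2. \<forall>a b.
        B (xs[i := smul a x + smul b y]) = smul a (B (xs[i := x])) + smul b (B (xs[i := y]))) \<and>
     (\<forall>xs \<in> dom_g m. \<forall>p. p permutes {..<m} \<longrightarrow> B (map (\<lambda>i. xs ! p i) [0..<m]) = B xs) \<and>
     (\<forall>xs \<in> dom_g m. \<forall>y\<in>sl2.
        lie y (B xs) = (\<Sum>i<m. B (xs[i := lie y (xs ! i)])))}"

definition P_poly :: "nat \<Rightarrow> mat2 list \<Rightarrow> complex" where
  "P_poly n xs = (1 / of_nat (fact (2*n))) *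
     (\<Sum>\<sigma>\<in>{\<sigma>. \<sigma> permutes {..<2*n}}. \<Prod>j<n. form (xs ! \<sigma> (2*j)) (xs ! \<sigma> (2*j+1)))"

definition B_g :: "nat \<Rightarrow> mat2 list \<Rightarrow> mat2" where
  "B_g n xs = (if xs \<in> dom_g (2*n+1) then
     (\<Sum>k<2*n+1. smul (P_poly n (take k xs @ drop (Suc k) xs)) (xs ! k)) else 0)"

end

theory Submission imports Defs begin

lemma mat_eq: "(A::mat2) = B \<longleftrightarrow> A$1$1 = B$1$1 \<and> A$1$2 = B$1$2 \<and> A$2$1 = B$2$1 \<and> A$2$2 = B$2$2"
  by (auto simp add: vec_eq_iff forall_2)
lemma ne12[simp]: "(1::2) \<noteq> 2" "(2::2) \<noteq> 1" by simp_all
lemma lie_c[simp]: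
  "(lie x y)$1$1 = x$1$2*y$2$1 - y$1$2*x$2$1"
  "(lie x y)$2$2 = x$2$1*y$1$2 - y$2$1*x$1$2"
  "(lie x y)$1$2 = x$1$1*y$1$2 + x$1$2*y$2$2 - y$1$1*x$1$2 - y$1$2*x$2$2"
  "(lie x y)$2$1 = x$2$1*y$1$1 + x$2$2*y$2$1 - y$2$1*x$1$1 - y$2$2*x$2$1"
  by (simp_all add: lie_def matrix_matrix_mult_def sum_2 algebra_simps)
lemma smul_c[simp]: "(smul c A)$i$j = c * A$i$j" by (simp add: smul_def)
lemma basis_c[simp]:
  "Ee$1$1 = 0" "Ee$1$2 = 1" "Ee$2$1 = 0" "Ee$2$2 = 0"
  "Ff$1$1 = 0" "Ff$1$2 = 0" "Ff$2$1 = 1" "Ff$2$2 = 0"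
  "Hh$1$1 = 1" "Hh$1$2 = 0" "Hh$2$1 = 0" "Hh$2$2 = -1"
  by (simp_all add: Ee_def Ff_def Hh_def)
lemma form_expl: "form x y = (x$1$1-x$2$2)*(y$1$1-y$2$2) + 2*(x$1$2*y$2$1 + x$2$1*y$1$2)"
  by (simp add: form_def tr_g_def field_simps)

lemma sl2_iff: "A \<in> sl2 \<longleftrightarrow> A$1$1 + A$2$2 = 0" by (simp add: sl2_def mtrace_def)
lemma basis_sl2[simp]: "Ee \<in> sl2" "Ff \<in> sl2" "Hh \<in> sl2" "(0::mat2) \<in> sl2"
  by (simp_all add: sl2_iff)
lemma lie_sl2[simp]: "lie x y \<in> sl2" by (simp add: sl2_iff)
lemma smul_sl2[simp]: "A \<in> sl2 \<Longrightarrow> smul c A \<in> sl2"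
proof -
  have "(smul c A)$1$1 + (smul c A)$2$2 = c * (A$1$1 + A$2$2)" by (simp add: algebra_simps)
  then show "A \<in> sl2 \<Longrightarrow> smul c A \<in> sl2" by (simp add: sl2_iff)
qed
lemma add_sl2[simp]: "A \<in> sl2 \<Longrightarrow> B \<in> sl2 \<Longrightarrow> A + B \<in> sl2"
proof -
  have "(A+B)$1$1 + (A+B)$2$2 = (A$1$1 + A$2$2) + (B$1$1 + B$2$2)" by (simp add: algebra_simps)
  then show "A \<in> sl2 \<Longrightarrow> B \<in> sl2 \<Longrightarrow> A + B \<in> sl2" by (simp add: sl2_iff)
qed
lemma sum_sl2: "(\<And>k. k \<in> S \<Longrightarrow> f k \<in> sl2) \<Longrightarrow> sum f S \<in> sl2"
  by (induction S rule: infinite_finite_induct) auto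

lemma basis_ne[simp]: "Ee \<noteq> Ff" "Ee \<noteq> Hh" "Ff \<noteq> Hh" "Ff \<noteq> Ee" "Hh \<noteq> Ee" "Hh \<noteq> Ff"
  by (simp_all add: mat_eq)

lemma smul_zero[simp]: "smul 0 A = 0" "smul c 0 = 0" by (simp_all add: mat_eq)
lemma smul_one[simp]: "smul 1 A = A" by (simp add: mat_eq)
lemma smul_smul[simp]: "smul a (smul b A) = smul (a*b) A" by (simp add: mat_eq)
lemma smul_eq0: "c \<noteq> 0 \<Longrightarrow> smul c A = 0 \<longleftrightarrow> A = 0" by (simp add: mat_eq)

lemma smul_add: "smul c (A + B) = smul c A + smul c B" by (simp add: mat_eq algebra_simps)
lemma lie_add: "lie y (A + B) = lie y A + lie y B" by (simp add: mat_eq algebra_simps)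
lemma lie_zero[simp]: "lie y 0 = 0" by (simp add: lie_def)
lemma smul_add_left: "smul (a + b) v = smul a v + smul b v" by (simp add: mat_eq algebra_simps)
lemma smul_sum: "smul c (sum f S) = sum (\<lambda>k. smul c (f k)) S"
  by (induction S rule: infinite_finite_induct) (simp_all add: smul_add)
lemma lie_sum: "lie y (sum f S) = sum (\<lambda>k. lie y (f k)) S"
  by (induction S rule: infinite_finite_induct) (simp_all add: lie_add)
lemma sum_smul_left: "sum (\<lambda>k. smul (g k) v) S = smul (sum g S) v"
  by (induction S rule: infinite_finite_induct) (simp_all add: smul_add_left)
lemma sum_const_mat: "sum (\<lambda>k. (v::mat2)) S = smul (of_nat (card S)) v"
  using sum_smul_left[of "\<lambda>_. 1" v S] by simp

lemma lie_basis[simp]: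
  "lie Ee Ee = 0" "lie Ee Ff = Hh" "lie Ee Hh = smul (-2) Ee"
  "lie Ff Ee = smul (-1) Hh" "lie Ff Ff = 0" "lie Ff Hh = smul 2 Ff"
  "lie Hh Ee = smul 2 Ee" "lie Hh Ff = smul (-2) Ff" "lie Hh Hh = 0"
  by (simp_all add: mat_eq)

lemma dom_upd: "xs \<in> dom_g m \<Longrightarrow> z \<in> sl2 \<Longrightarrow> xs[i:=z] \<in> dom_g m"
  by (auto simp: dom_g_def dest: set_update_subset_insert[THEN subsetD])
lemma dom_nth: "xs \<in> dom_g m \<Longrightarrow> i < m \<Longrightarrow> xs!i \<in> sl2"
  by (auto simp: dom_g_def)

context
  fixes B m
  assumes BS: "B \<in> S_inv m"
begin

lemma B_out: "xs \<notin> dom_g m \<Longrightarrow> B xs = 0" using BS by (simp add: S_inv_def)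
lemma B_sl2: "xs \<in> dom_g m \<Longrightarrow> B xs \<in> sl2" using BS by (simp add: S_inv_def)
lemma B_lin: "xs \<in> dom_g m \<Longrightarrow> i < m \<Longrightarrow> x \<in> sl2 \<Longrightarrow> y \<in> sl2 \<Longrightarrow>
   B (xs[i := smul a x + smul b y]) = smul a (B (xs[i := x])) + smul b (B (xs[i := y]))"
  using BS unfolding S_inv_def by blast
lemma B_perm: "xs \<in> dom_g m \<Longrightarrow> p permutes {..<m} \<Longrightarrow> B (map (\<lambda>i. xs ! p i) [0..<m]) = B xs"
  using BS unfolding S_inv_def by blast
lemma B_inv: "xs \<in> dom_g m \<Longrightarrow> y \<in> sl2 \<Longrightarrow> lie y (B xs) = (\<Sum>i<m. B (xs[i := lie y (xs ! i)]))"
  using BS unfolding S_inv_def by blast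

lemma B_scale: assumes "xs \<in> dom_g m" "i < m" "x \<in> sl2"
  shows "B (xs[i := smul a x]) = smul a (B (xs[i := x]))"
proof -
  have "smul a x = smul a x + smul 0 x" by (simp add: mat_eq)
  then show ?thesis using B_lin[OF assms(1,2,3,3), of a 0] by (simp add: mat_eq)
qed

lemma B_zero: assumes "xs \<in> dom_g m" "i < m"
  shows "B (xs[i := 0]) = 0"
  using B_scale[OF assms basis_sl2(3), of 0] by simp

lemma B_mset: assumes "xs \<in> dom_g m" "mset ys = mset xs"
  shows "B ys = B xs"
proof -
  obtain p where p: "p permutes {..<length xs}" "permute_list p xs = ys"
    using mset_eq_permutation[OF assms(2)] by blast
  have "length xs = m" using assms(1) by (simp add: dom_g_def)
  then show ?thesis using B_perm[OF assms(1)] p by (auto simp add: permute_list_def)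
qed

lemma B_upd_eq: assumes "xs \<in> dom_g m" "i < m" "j < m" "xs!i = xs!j" "z \<in> sl2"
  shows "B (xs[i:=z]) = B (xs[j:=z])"
proof -
  have l: "length xs = m" using assms(1) by (simp add: dom_g_def)
  show ?thesis
    by (rule B_mset) (use assms l in \<open>auto simp: mset_update intro: dom_upd\<close>)
qed

end

definition blk :: "nat \<Rightarrow> nat \<Rightarrow> nat \<Rightarrow> mat2 list" where
  "blk a b c = replicate a Ee @ replicate b Ff @ replicate c Hh"

lemma blk_dom: "a + b + c = m \<Longrightarrow> blk a b c \<in> dom_g m"
  by (auto simp: blk_def dom_g_def)
lemma blk_len[simp]: "length (blk a b c) = a + b + c" by (simp add: blk_def)
lemma mset_blk: "mset (blk a b c) = replicate_mset a Ee + replicate_mset b Ff + replicate_mset c Hh"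
  by (simp add: blk_def)
lemma blk_nth: "i < a + b + c \<Longrightarrow> blk a b c ! i = (if i < a then Ee else if i < a + b then Ff else Hh)"
  by (auto simp: blk_def nth_append)


lemma sum_split3: fixes a b c :: nat shows "(\<Sum>i<a+b+c. g i) = (\<Sum>i\<in>{0..<a}. g i) + (\<Sum>i\<in>{a..<a+b}. g i) + (\<Sum>i\<in>{a+b..<a+b+c}. g i)"
  proof -
  have "(\<Sum>i\<in>{0..<a}. g i) + (\<Sum>i\<in>{a..<a+b}. g i) = (\<Sum>i\<in>{0..<a+b}. g i)"
    using sum.atLeastLessThan_concat[of 0 a "a+b" g] by simp
  moreover have "(\<Sum>i\<in>{0..<a+b}. g i) + (\<Sum>i\<in>{a+b..<a+b+c}. g i) = (\<Sum>i\<in>{0..<a+b+c}. g i)"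
    using sum.atLeastLessThan_concat[of 0 "a+b" "a+b+c" g] by simp
  ultimately show ?thesis by (simp add: lessThan_atLeast0)
qed

lemma B_rel:
  assumes BS: "B \<in> S_inv m" and abc: "a + b + c = m" and y: "y \<in> sl2"
  shows "lie y (B (blk a b c)) = smul (of_nat a) (B ((blk a b c)[0 := lie y Ee]))
     + smul (of_nat b) (B ((blk a b c)[a := lie y Ff])) + smul (of_nat c) (B ((blk a b c)[a+b := lie y Hh]))"
proof -
  let ?xs = "blk a b c"
  have d: "?xs \<in> dom_g m" using abc by (rule blk_dom)
  have "lie y (B ?xs) = (\<Sum>i<m. B (?xs[i := lie y (?xs ! i)]))" using B_inv[OF BS d y] .
  also have "\<dots> = (\<Sum>i\<in>{0..<a}. B (?xs[i := lie y (?xs ! i)])) + (\<Sum>i\<in>{a..<a+b}. B (?xs[i := lie y (?xs ! i)]))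
      + (\<Sum>i\<in>{a+b..<a+b+c}. B (?xs[i := lie y (?xs ! i)]))"
    using abc sum_split3 by blast
  also have "(\<Sum>i\<in>{0..<a}. B (?xs[i := lie y (?xs ! i)])) = (\<Sum>i\<in>{0..<a}. B (?xs[0 := lie y Ee]))"
  proof (rule sum.cong)
    fix i assume i: "i \<in> {0..<a}"
    then show "B (?xs[i := lie y (?xs ! i)]) = B (?xs[0 := lie y Ee])"
      using B_upd_eq[OF BS d, of i 0] abc by (simp add: blk_nth)
  qed simp
  also have "(\<Sum>i\<in>{a..<a+b}. B (?xs[i := lie y (?xs ! i)])) = (\<Sum>i\<in>{a..<a+b}. B (?xs[a := lie y Ff]))"
  proof (rule sum.cong)
    fix i assume i: "i \<in> {a..<a+b}"
    then show "B (?xs[i := lie y (?xs ! i)]) = B (?xs[a := lie y Ff])"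
      using B_upd_eq[OF BS d, of i a] abc by (simp add: blk_nth)
  qed simp
  also have "(\<Sum>i\<in>{a+b..<a+b+c}. B (?xs[i := lie y (?xs ! i)])) = (\<Sum>i\<in>{a+b..<a+b+c}. B (?xs[a+b := lie y Hh]))"
  proof (rule sum.cong)
    fix i assume i: "i \<in> {a+b..<a+b+c}"
    then show "B (?xs[i := lie y (?xs ! i)]) = B (?xs[a+b := lie y Hh])"
      using B_upd_eq[OF BS d, of i "a+b"] abc by (simp add: blk_nth)
  qed simp
  finally show ?thesis by (simp del: sum_constant add: sum_const_mat)
qed


lemma rep_pred[simp]: "0 < a \<Longrightarrow> add_mset x (replicate_mset (a - Suc 0) x) = replicate_mset a x"
  by (cases a) auto
lemma mset_blk_e: "0 < a \<Longrightarrow> mset ((blk a b c)[0 := z]) = add_mset z (mset (blk (a-1) b c))"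
  by (cases a) (auto simp: mset_update blk_nth mset_blk)
lemma mset_blk_f: "0 < b \<Longrightarrow> mset ((blk a b c)[a := z]) = add_mset z (mset (blk a (b-1) c))"
  by (cases b) (auto simp: mset_update blk_nth mset_blk)
lemma mset_blk_h: "0 < c \<Longrightarrow> mset ((blk a b c)[a+b := z]) = add_mset z (mset (blk a b (c-1)))"
  by (cases c) (auto simp: mset_update blk_nth mset_blk)

context
  fixes B m
  assumes BS: "B \<in> S_inv m"
begin

lemma slotE0: assumes "a+b+c = m" shows "smul (of_nat a) (B ((blk a b c)[0 := 0])) = 0"
proof (cases a)
  case (Suc a') then show ?thesis using B_zero[OF BS blk_dom[OF assms], of 0] assms by simp
qed simp
lemma slotF0: assumes "a+b+c = m" shows "smul (of_nat b) (B ((blk a b c)[a := 0])) = 0"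
proof (cases b)
  case (Suc b') then show ?thesis using B_zero[OF BS blk_dom[OF assms], of a] assms by simp
qed simp
lemma slotH0: assumes "a+b+c = m" shows "smul (of_nat c) (B ((blk a b c)[a+b := 0])) = 0"
proof (cases c)
  case (Suc c') then show ?thesis using B_zero[OF BS blk_dom[OF assms], of "a+b"] assms by simp
qed simp

lemma R_e: assumes abc: "a+b+c=m"
  shows "lie Ee (B (blk a b c)) = smul (of_nat b) (B (blk a (b-1) (c+1))) + smul (-2 * of_nat c) (B (blk (a+1) b (c-1)))"
proof -
  have r: "lie Ee (B (blk a b c)) = smul (of_nat a) (B ((blk a b c)[0 := 0])) + smul (of_nat b) (B ((blk a b c)[a := Hh])) + smul (of_nat c) (B ((blk a b c)[a+b := smul (-2) Ee]))"
    using B_rel[OF BS abc, of Ee] by simp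
  have t2: "smul (of_nat b) (B ((blk a b c)[a := Hh])) = smul (of_nat b) (B (blk a (b-1) (c+1)))"
  proof (cases "b = 0")
    case False
    have "B ((blk a b c)[a := Hh]) = B (blk a (b-1) (c+1))"
      by (rule B_mset[OF BS]) (use False abc in \<open>auto intro: blk_dom simp: mset_blk_f mset_blk\<close>)
    then show ?thesis by simp
  qed simp
  have t3: "smul (of_nat c) (B ((blk a b c)[a+b := smul (-2) Ee])) = smul (-2 * of_nat c) (B (blk (a+1) b (c-1)))"
  proof (cases "c = 0")
    case False
    have "B ((blk a b c)[a+b := smul (-2) Ee]) = smul (-2) (B ((blk a b c)[a+b := Ee]))"
      using B_scale[OF BS blk_dom[OF abc]] False abc by simp
    moreover have "B ((blk a b c)[a+b := Ee]) = B (blk (a+1) b (c-1))"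
      by (rule B_mset[OF BS]) (use False abc in \<open>auto intro: blk_dom simp: mset_blk_h mset_blk\<close>)
    ultimately show ?thesis by (simp add: mult.commute)
  qed simp
  show ?thesis using r t2 t3 slotE0[OF abc] by simp
qed

lemma R_f: assumes abc: "a+b+c=m"
  shows "lie Ff (B (blk a b c)) = smul (- of_nat a) (B (blk (a-1) b (c+1))) + smul (2 * of_nat c) (B (blk a (b+1) (c-1)))"
proof -
  have r: "lie Ff (B (blk a b c)) = smul (of_nat a) (B ((blk a b c)[0 := smul (-1) Hh])) + smul (of_nat b) (B ((blk a b c)[a := 0])) + smul (of_nat c) (B ((blk a b c)[a+b := smul 2 Ff]))"
    using B_rel[OF BS abc, of Ff] by simp
  have t1: "smul (of_nat a) (B ((blk a b c)[0 := smul (-1) Hh])) = smul (- of_nat a) (B (blk (a-1) b (c+1)))"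
  proof (cases "a = 0")
    case False
    have "B ((blk a b c)[0 := smul (-1) Hh]) = smul (-1) (B ((blk a b c)[0 := Hh]))"
      using B_scale[OF BS blk_dom[OF abc]] False abc by simp
    moreover have "B ((blk a b c)[0 := Hh]) = B (blk (a-1) b (c+1))"
      by (rule B_mset[OF BS]) (use False abc in \<open>auto intro: blk_dom simp: mset_blk_e mset_blk\<close>)
    ultimately show ?thesis by simp
  qed simp
  have t3: "smul (of_nat c) (B ((blk a b c)[a+b := smul 2 Ff])) = smul (2 * of_nat c) (B (blk a (b+1) (c-1)))"
  proof (cases "c = 0")
    case False
    have "B ((blk a b c)[a+b := smul 2 Ff]) = smul 2 (B ((blk a b c)[a+b := Ff]))"
      using B_scale[OF BS blk_dom[OF abc]] False abc by simp
    moreover have "B ((blk a b c)[a+b := Ff]) = B (blk a (b+1) (c-1))"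
      by (rule B_mset[OF BS]) (use False abc in \<open>auto intro: blk_dom simp: mset_blk_h mset_blk\<close>)
    ultimately show ?thesis by (simp add: mult.commute)
  qed simp
  show ?thesis using r t1 t3 slotF0[OF abc] by simp
qed

lemma R_h: assumes abc: "a+b+c=m"
  shows "lie Hh (B (blk a b c)) = smul (2 * of_nat a - 2 * of_nat b) (B (blk a b c))"
proof -
  have r: "lie Hh (B (blk a b c)) = smul (of_nat a) (B ((blk a b c)[0 := smul 2 Ee])) + smul (of_nat b) (B ((blk a b c)[a := smul (-2) Ff])) + smul (of_nat c) (B ((blk a b c)[a+b := 0]))"
    using B_rel[OF BS abc, of Hh] by simp
  have t1: "smul (of_nat a) (B ((blk a b c)[0 := smul 2 Ee])) = smul (2 * of_nat a) (B (blk a b c))"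
  proof (cases "a = 0")
    case False
    have "B ((blk a b c)[0 := smul 2 Ee]) = smul 2 (B ((blk a b c)[0 := Ee]))"
      using B_scale[OF BS blk_dom[OF abc]] False abc by simp
    moreover have "B ((blk a b c)[0 := Ee]) = B (blk a b c)"
      by (rule B_mset[OF BS]) (use False abc in \<open>auto intro: blk_dom simp: mset_blk_e mset_blk\<close>)
    ultimately show ?thesis by (simp add: mult.commute)
  qed simp
  have t2: "smul (of_nat b) (B ((blk a b c)[a := smul (-2) Ff])) = smul (-2 * of_nat b) (B (blk a b c))"
  proof (cases "b = 0")
    case False
    have "B ((blk a b c)[a := smul (-2) Ff]) = smul (-2) (B ((blk a b c)[a := Ff]))"
      using B_scale[OF BS blk_dom[OF abc]] False abc by simp
    moreover have "B ((blk a b c)[a := Ff]) = B (blk a b c)"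
      by (rule B_mset[OF BS]) (use False abc in \<open>auto intro: blk_dom simp: mset_blk_f mset_blk\<close>)
    ultimately show ?thesis by (simp add: mult.commute)
  qed simp
  show ?thesis using r t1 t2 slotH0[OF abc] by (simp add: mat_eq algebra_simps)
qed

end


lemma of_nat_ne_m1[simp]: "(of_nat c :: complex) \<noteq> -1"
proof
  assume "of_nat c = (-1::complex)"
  then have "Re (of_nat c) = Re (-1)" by simp
  then show False by simp
qed

lemma two_nat_ne0[simp]: "(2 + 2 * of_nat c :: complex) \<noteq> 0"
proof
  assume "2 + 2 * of_nat c = (0::complex)"
  then have "Re (2 + 2 * of_nat c) = Re 0" by simp
  then show False by simp
qed

lemma W_unique: assumes BS: "B \<in> S_inv m" and h0: "B (blk 0 0 m) = 0"
  shows "a+b+c = m \<Longrightarrow> B (blk a b c) = 0"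
proof (induction "a+b" arbitrary: a b c rule: less_induct)
  case less
  show ?case
  proof (cases "a = 0")
    case False
    have abc: "(a-1) + b + (c+1) = m" using less.prems False by simp
    have ih1: "B (blk (a-1) b (c+1)) = 0" using less.hyps[OF _ abc] False by simp
    have ih2: "smul (of_nat b) (B (blk (a-1) (b-1) (c+1+1))) = 0"
    proof (cases "b = 0")
      case False
      have "(a-1) + (b-1) + (c+1+1) = m" using less.prems False \<open>a \<noteq> 0\<close> by simp
      from less.hyps[OF _ this] False \<open>a \<noteq> 0\<close> show ?thesis by simp
    qed simp
    have "lie Ee (B (blk (a-1) b (c+1))) = smul (of_nat b) (B (blk (a-1) (b-1) (c+1+1))) + smul (-2 * of_nat (c+1)) (B (blk (a-1+1) b (c+1-1)))"
      by (rule R_e[OF BS abc])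
    then have "smul (-2 * of_nat (c+1)) (B (blk a b c)) = 0" using ih1 ih2 False by simp
    moreover have "(-2 * of_nat (c+1) :: complex) \<noteq> 0" by (simp add: of_nat_eq_0_iff)
    ultimately show ?thesis using smul_eq0 by blast
  next
    case True
    show ?thesis
    proof (cases "b = 0")
      case True
      then show ?thesis using \<open>a = 0\<close> less.prems h0 by simp
    next
      case False
      have abc: "0 + (b-1) + (c+1) = m" using less.prems False \<open>a = 0\<close> by simp
      have ih1: "B (blk 0 (b-1) (c+1)) = 0" using less.hyps[OF _ abc] False \<open>a = 0\<close> by simp
      have "lie Ff (B (blk 0 (b-1) (c+1))) = smul (- of_nat 0) (B (blk (0-1) (b-1) (c+1+1))) + smul (2 * of_nat (c+1)) (B (blk 0 (b-1+1) (c+1-1)))"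
        by (rule R_f[OF BS abc])
      then have "smul (2 * of_nat (c+1)) (B (blk a b c)) = 0" using ih1 False \<open>a = 0\<close> by simp
      moreover have "(2 * of_nat (c+1) :: complex) \<noteq> 0" by (simp add: of_nat_eq_0_iff)
      ultimately show ?thesis using smul_eq0 by blast
    qed
  qed
qed

lemma basis_mset: "set xs \<subseteq> {Ee,Ff,Hh} \<Longrightarrow>
  mset xs = mset (blk (count (mset xs) Ee) (count (mset xs) Ff) (count (mset xs) Hh))"
proof (induction xs)
  case (Cons x xs)
  then have x: "x = Ee \<or> x = Ff \<or> x = Hh" and IH: "mset xs = mset (blk (count (mset xs) Ee) (count (mset xs) Ff) (count (mset xs) Hh))" by auto
  from x show ?case
  proof (elim disjE)
    assume "x = Ee" then show ?thesis using IH by (simp add: mset_blk)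
  next
    assume "x = Ff" then show ?thesis using IH by (simp add: mset_blk)
  next
    assume "x = Hh" then show ?thesis using IH by (simp add: mset_blk)
  qed
qed (simp add: blk_def)

lemma B_all_zero: assumes BS: "B \<in> S_inv m" and W0: "\<And>a b c. a+b+c = m \<Longrightarrow> B (blk a b c) = 0"
  shows "B xs = 0"
proof -
  have basis: "B xs = 0" if d: "xs \<in> dom_g m" and s: "set xs \<subseteq> {Ee,Ff,Hh}" for xs
  proof -
    let ?a = "count (mset xs) Ee" and ?b = "count (mset xs) Ff" and ?c = "count (mset xs) Hh"
    have me: "mset xs = mset (blk ?a ?b ?c)" using basis_mset[OF s] .
    have "size (mset xs) = size (mset (blk ?a ?b ?c))" using me by simp
    then have abc: "?a + ?b + ?c = m" using d by (simp add: dom_g_def)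
    have "B xs = B (blk ?a ?b ?c)" by (rule B_mset[OF BS blk_dom[OF abc] me])
    then show ?thesis using W0[OF abc] by simp
  qed
  have step: "\<forall>xs\<in>dom_g m. (\<forall>i. k \<le> i \<longrightarrow> i < m \<longrightarrow> xs!i \<in> {Ee,Ff,Hh}) \<longrightarrow> B xs = 0" for k
  proof (induction k)
    case 0
    show ?case
    proof (intro ballI impI)
      fix xs assume d: "xs \<in> dom_g m" and h: "\<forall>i. 0 \<le> i \<longrightarrow> i < m \<longrightarrow> xs!i \<in> {Ee,Ff,Hh}"
      have "set xs \<subseteq> {Ee,Ff,Hh}" using d h by (auto simp: dom_g_def in_set_conv_nth)
      then show "B xs = 0" using basis d by blast
    qed
  next
    case (Suc k)
    show ?case
    proof (intro ballI impI)
      fix xs assume d: "xs \<in> dom_g m" and h: "\<forall>i. Suc k \<le> i \<longrightarrow> i < m \<longrightarrow> xs!i \<in> {Ee,Ff,Hh}"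
      show "B xs = 0"
      proof (cases "k < m")
        case False
        then show ?thesis using Suc.IH d h by auto
      next
        case True
        have len: "length xs = m" using d by (simp add: dom_g_def)
        let ?x = "xs!k"
        have xs: "?x \<in> sl2" using dom_nth[OF d True] .
        have upd0: "B (xs[k := z]) = 0" if "z \<in> {Ee,Ff,Hh}" for z
        proof -
          have "xs[k := z] \<in> dom_g m" using dom_upd[OF d] that by auto
          moreover have "\<forall>i. k \<le> i \<longrightarrow> i < m \<longrightarrow> (xs[k:=z])!i \<in> {Ee,Ff,Hh}"
            using h that len by (auto simp: nth_list_update)
          ultimately show ?thesis using Suc.IH by blast
        qed
        let ?w = "smul (?x$2$1) Ff + smul (?x$1$1) Hh"
        have decomp: "?x = smul (?x$1$2) Ee + smul 1 ?w"
          using xs by (simp add: mat_eq sl2_iff) (metis add.commute add_eq_0_iff2 minus_equation_iff)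
        have wsl: "?w \<in> sl2" by simp
        have "B xs = B (xs[k := smul (?x$1$2) Ee + smul 1 ?w])" using decomp by simp
        also have "\<dots> = smul (?x$1$2) (B (xs[k := Ee])) + smul 1 (B (xs[k := ?w]))"
          by (rule B_lin[OF BS d True]) (simp_all add: wsl)
        also have "B (xs[k := ?w]) = smul (?x$2$1) (B (xs[k := Ff])) + smul (?x$1$1) (B (xs[k := Hh]))"
          by (rule B_lin[OF BS d True]) simp_all
        finally show ?thesis using upd0 by simp
      qed
    qed
  qed
  show ?thesis
  proof (cases "xs \<in> dom_g m")
    case True then show ?thesis using step[of m] by auto
  next
    case False then show ?thesis using B_out[OF BS] by simp
  qed
qed


lemma lie_E_smulH: "lie Ee (smul k Hh) = smul (-2*k) Ee" by (simp add: mat_eq)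
lemma lie_F_smulE: "lie Ff (smul k Ee) = smul (-k) Hh" by (simp add: mat_eq)
lemma smul_cancel: "k \<noteq> 0 \<Longrightarrow> smul k X = smul l Y \<Longrightarrow> X = smul (l/k) Y"
  by (auto simp: mat_eq field_simps)

lemma W00: assumes BS: "B \<in> S_inv m"
  shows "B (blk 0 0 m) = smul ((B (blk 0 0 m))$1$1) Hh"
proof -
  let ?X = "B (blk 0 0 m)"
  have "lie Hh ?X = smul (2 * of_nat 0 - 2 * of_nat 0) ?X" using R_h[OF BS, of 0 0 m] by simp
  then have "lie Hh ?X = 0" by simp
  then have "?X$1$2 = 0" "?X$2$1 = 0" by (simp_all add: mat_eq)
  moreover have "?X \<in> sl2" using B_sl2[OF BS blk_dom[of 0 0 m]] by simp
  ultimately show ?thesis by (simp add: mat_eq sl2_iff) (metis add_eq_0_iff2 minus_equation_iff add.commute)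
qed

lemma W_even: assumes BS: "B \<in> S_inv m" and mN: "m = 2*N" and N: "1 \<le> N"
  shows "B (blk 0 0 m) = 0"
proof -
  define \<gamma> where "\<gamma> = (B (blk 0 0 m))$1$1"
  have claim: "a \<le> N \<Longrightarrow> \<exists>p::real. p > 0 \<and> B (blk a a (m-2*a)) = smul (\<gamma> * of_real p) Hh \<and>
        (0 < a \<longrightarrow> B (blk a (a-1) (m-2*a+1)) = smul (2*\<gamma> * of_real p) Ee)" for a
  proof (induction a)
    case 0
    show ?case by (rule exI[of _ 1]) (use W00[OF BS] in \<open>simp add: \<gamma>_def\<close>)
  next
    case (Suc a)
    then obtain p where p: "p > 0" and Wa: "B (blk a a (m-2*a)) = smul (\<gamma> * of_real p) Hh"
      and Wa1: "0 < a \<longrightarrow> B (blk a (a-1) (m-2*a+1)) = smul (2*\<gamma> * of_real p) Ee" by auto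
    define c where "c = m - 2*a"
    have c2: "c \<ge> 2" using Suc.prems mN by (simp add: c_def)
    have abc: "a + a + c = m" using c2 by (simp add: c_def)
    have t1: "smul (of_nat a) (B (blk a (a-1) (c+1))) = smul (2 * of_nat a * \<gamma> * of_real p) Ee"
      using Wa1 by (cases "a = 0") (simp_all add: c_def mult.assoc mult.left_commute)
    let ?X = "B (blk (a+1) a (c-1))"
    have "lie Ee (B (blk a a c)) = smul (of_nat a) (B (blk a (a-1) (c+1))) + smul (-2 * of_nat c) ?X"
      using R_e[OF BS abc] by simp
    then have "smul (-2 * \<gamma> * of_real p) Ee = smul (2 * of_nat a * \<gamma> * of_real p) Ee + smul (-2 * of_nat c) ?X"
      using Wa t1 by (simp add: c_def lie_E_smulH mult.assoc)
    then have eqX: "smul (2 * of_nat c) ?X = smul (2 * (of_nat a + 1) * \<gamma> * of_real p) Ee"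
      by (simp add: mat_eq algebra_simps)
    have cne: "(of_nat c :: complex) \<noteq> 0" using c2 by simp
    have X0: "?X = smul ((2 * (of_nat a + 1) * \<gamma> * of_real p) / (2 * of_nat c)) Ee"
      by (rule smul_cancel[OF _ eqX]) (use cne in simp)
    have X: "?X = smul ((of_nat a + 1) * \<gamma> * of_real p / of_nat c) Ee"
    proof -
      have sc: "(2 * (of_nat a + 1) * \<gamma> * of_real p) / (2 * of_nat c) = ((of_nat a + 1) * \<gamma> * of_real p / of_nat c :: complex)"
        by (metis (no_types, lifting) mult.assoc mult_divide_mult_cancel_left zero_neq_numeral)
      show ?thesis using X0 unfolding sc .
    qed
    let ?Y = "B (blk (a+1) (a+1) (c-1-1))"
    have abc2: "(a+1) + a + (c-1) = m" using c2 abc by simp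
    define k where "k = (of_nat a + 1) * \<gamma> * of_real p / of_nat c"
    have Xk: "?X = smul k Ee" unfolding k_def by (rule X)
    have Wa': "B (blk a a c) = smul (\<gamma> * of_real p) Hh" using Wa by (simp add: c_def)
    have Rf: "lie Ff ?X = smul (- of_nat (a+1)) (B (blk a a c)) + smul (2 * of_nat (c-1)) ?Y"
      using R_f[OF BS abc2] c2 by simp
    have "smul (- (k)) Hh = smul (- of_nat (a+1)) (smul (\<gamma> * of_real p) Hh) + smul (2 * of_nat (c-1)) ?Y"
      using Rf unfolding Xk Wa' lie_F_smulE .
    then have eqY: "smul (2 * of_nat (c-1)) ?Y = smul ((of_nat a + 1) * \<gamma> * of_real p - k) Hh"
      unfolding mat_eq by simp algebra
    have c1ne: "(of_nat (c-1) :: complex) \<noteq> 0" using c2 by simp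
    have Y0: "?Y = smul (((of_nat a + 1) * \<gamma> * of_real p - k) / (2 * of_nat (c-1))) Hh"
      by (rule smul_cancel[OF _ eqY]) (use c1ne in simp)
    define p' where "p' = (real a + 1) * p / (2 * real c)"
    have p'pos: "p' > 0" using p c2 by (simp add: p'_def)
    have of_c1: "(of_nat (c-1) :: complex) = of_nat c - 1" using c2 by (simp add: of_nat_diff)
    have cne1: "(of_nat c :: complex) \<noteq> 1" using c2
      by (metis of_nat_1 of_nat_eq_iff not_numeral_le_zero numeral_le_one_iff semiring_norm(69) one_le_numeral le_antisym)
    have "((of_nat a + 1) * \<gamma> * of_real p - k) / (2 * of_nat (c-1))
        = \<gamma> * of_real p'"
      using cne cne1 unfolding of_c1 p'_def k_def by (simp add: field_simps)
    with Y0 have Y: "?Y = smul (\<gamma> * of_real p') Hh" by simp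
    have X': "?X = smul (2 * \<gamma> * of_real p') Ee"
    proof -
      have "(of_nat a + 1) * \<gamma> * of_real p / of_nat c = 2 * \<gamma> * of_real p'"
        using cne unfolding p'_def by (simp add: field_simps)
      then show ?thesis using X by simp
    qed
    have i1: "m - Suc (Suc (2 * a)) = c - Suc (Suc 0)" and i2: "Suc (m - Suc (Suc (2 * a))) = c - Suc 0" using c2 by (simp_all add: c_def)
    have i3: "Suc (c - Suc (Suc 0)) = c - Suc 0" using c2 by simp
    show ?case using p'pos Y X' by (intro exI[of _ p']) (simp add: i1 i2 i3)
  qed
  obtain p where p: "p > 0" and WN: "B (blk N N (m-2*N)) = smul (\<gamma> * of_real p) Hh"
      and WN1: "B (blk N (N-1) (m-2*N+1)) = smul (2*\<gamma> * of_real p) Ee"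
    using claim[of N] N by auto
  have abc: "N + N + 0 = m" using mN by simp
  have "lie Ee (B (blk N N 0)) = smul (of_nat N) (B (blk N (N-1) (0+1))) + smul (-2 * of_nat 0) (B (blk (N+1) N (0-1)))"
    using R_e[OF BS abc] .
  then have "smul (-2 * \<gamma> * of_real p) Ee = smul (of_nat N * (2*\<gamma> * of_real p)) Ee"
    using WN WN1 mN by (simp add: lie_E_smulH mult.assoc)
  then have "-2 * \<gamma> * of_real p = of_nat N * (2*\<gamma> * of_real p)" by (simp add: mat_eq)
  then have "\<gamma> * of_real p * (2 + 2 * of_nat N) = 0" by algebra
  then have "\<gamma> = 0" using p by simp
  then show ?thesis using W00[OF BS] by (simp add: \<gamma>_def)
qed



lemma form_lin1: "form (smul a x + smul b y) v = a * form x v + b * form y v"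
  by (simp add: form_expl algebra_simps)
lemma form_lin2: "form u (smul a x + smul b y) = a * form u x + b * form u y"
  by (simp add: form_expl algebra_simps)
lemma form_inv: "form (lie y u) v + form u (lie y v) = 0"
  by (simp add: form_expl algebra_simps)
lemma form_HH: "form Hh Hh = 4" by (simp add: form_expl)

lemma perm_lt: "\<sigma> permutes {..<N} \<Longrightarrow> k < N \<Longrightarrow> \<sigma> k < N"
  using permutes_in_image by fastforce

lemma KP:
  assumes \<sigma>: "\<sigma> permutes {..<2*n}" and t: "t < 2*n" and len: "length zs = 2*n"
  shows "(\<Prod>j<n. form ((zs[\<sigma> t := w]) ! \<sigma> (2*j)) ((zs[\<sigma> t := w]) ! \<sigma> (2*j+1))) =
    (if even t then form w (zs ! \<sigma> (t+1)) else form (zs ! \<sigma> (t-1)) w) *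
    (\<Prod>j\<in>{..<n}-{t div 2}. form (zs ! \<sigma> (2*j)) (zs ! \<sigma> (2*j+1)))"
proof -
  let ?j0 = "t div 2"
  have j0: "?j0 \<in> {..<n}" using t by auto
  have inj: "inj \<sigma>" using permutes_inj[OF \<sigma>] .
  have st: "\<sigma> t < length zs" using perm_lt[OF \<sigma> t] len by simp
  let ?f = "\<lambda>j. form ((zs[\<sigma> t := w]) ! \<sigma> (2*j)) ((zs[\<sigma> t := w]) ! \<sigma> (2*j+1))"
  have "(\<Prod>j<n. ?f j) = ?f ?j0 * (\<Prod>j\<in>{..<n}-{?j0}. ?f j)"
    by (rule prod.remove) (use j0 in auto)
  also have "(\<Prod>j\<in>{..<n}-{?j0}. ?f j) = (\<Prod>j\<in>{..<n}-{?j0}. form (zs ! \<sigma> (2*j)) (zs ! \<sigma> (2*j+1)))"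
  proof (rule prod.cong)
    fix j assume "j \<in> {..<n}-{?j0}"
    then have jj: "j \<noteq> t div 2" by simp
    have n1: "2*j \<noteq> t"
    proof
      assume "2*j = t" then have "t div 2 = j" by simp
      then show False using jj by simp
    qed
    have n2: "2*j+1 \<noteq> t"
    proof
      assume "2*j+1 = t" then have "t div 2 = j" by simp
      then show False using jj by simp
    qed
    have "\<sigma> (2*j) \<noteq> \<sigma> t" using n1 injD[OF inj] by blast
    moreover have "\<sigma> (2*j+1) \<noteq> \<sigma> t" using n2 injD[OF inj] by blast
    ultimately have "\<sigma> (2*j) \<noteq> \<sigma> t" "\<sigma> (2*j+1) \<noteq> \<sigma> t" by simp_all
    then show "?f j = form (zs ! \<sigma> (2*j)) (zs ! \<sigma> (2*j+1))" by simp
  qed simp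
  also have "?f ?j0 = (if even t then form w (zs ! \<sigma> (t+1)) else form (zs ! \<sigma> (t-1)) w)"
  proof (cases "even t")
    case True
    then have e1: "2 * ?j0 = t" by (rule even_two_times_div_two)
    then have e: "2 * ?j0 = t" "2 * ?j0 + 1 = t + 1" by simp_all
    have "\<sigma> (t+1) \<noteq> \<sigma> t"
    proof
      assume "\<sigma> (t+1) = \<sigma> t" then have "t+1 = t" by (rule injD[OF inj])
      then show False by simp
    qed
    then show ?thesis using True st unfolding e by simp
  next
    case False
    then have e2: "2 * ?j0 + 1 = t" by (rule odd_two_times_div_two_succ)
    then have e: "2 * ?j0 = t - 1" "2 * ?j0 + 1 = t" by simp_all
    have "t \<noteq> 0" using odd_pos[OF False] by simp
    then have "\<sigma> (t-1) \<noteq> \<sigma> t"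
    proof -
      assume t0: "t \<noteq> 0"
      show ?thesis
      proof
        assume "\<sigma> (t-1) = \<sigma> t" then have "t-1 = t" by (rule injD[OF inj])
        then show False using t0 by simp
      qed
    qed
    then show ?thesis using False st unfolding e by simp
  qed
  finally show ?thesis .
qed

lemma KP2:
  assumes \<sigma>: "\<sigma> permutes {..<2*n}" and i: "i < 2*n" and len: "length zs = 2*n"
  shows "(\<Prod>j<n. form ((zs[i := w]) ! \<sigma> (2*j)) ((zs[i := w]) ! \<sigma> (2*j+1))) =
    (if even (inv \<sigma> i) then form w (zs ! \<sigma> (inv \<sigma> i+1)) else form (zs ! \<sigma> (inv \<sigma> i-1)) w) *
    (\<Prod>j\<in>{..<n}-{inv \<sigma> i div 2}. form (zs ! \<sigma> (2*j)) (zs ! \<sigma> (2*j+1)))"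
proof -
  have t: "inv \<sigma> i < 2*n" using perm_lt[OF permutes_inv[OF \<sigma>] i] .
  have "\<sigma> (inv \<sigma> i) = i" using permutes_inverses(1)[OF \<sigma>] .
  then show ?thesis using KP[OF \<sigma> t len, of w] by simp
qed

lemma P_lin:
  assumes i: "i < 2*n" and len: "length zs = 2*n"
  shows "P_poly n (zs[i := smul a x + smul b y]) = a * P_poly n (zs[i := x]) + b * P_poly n (zs[i := y])"
proof -
  let ?S = "{\<sigma>. \<sigma> permutes {..<2*n}}"
  let ?F = "\<lambda>w \<sigma>. \<Prod>j<n. form ((zs[i := w]) ! \<sigma> (2*j)) ((zs[i := w]) ! \<sigma> (2*j+1))"
  have "(\<Sum>\<sigma>\<in>?S. ?F (smul a x + smul b y) \<sigma>) = (\<Sum>\<sigma>\<in>?S. a * ?F x \<sigma> + b * ?F y \<sigma>)"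
  proof (rule sum.cong)
    fix \<sigma> assume "\<sigma> \<in> ?S"
    then have \<sigma>: "\<sigma> permutes {..<2*n}" by simp
    show "?F (smul a x + smul b y) \<sigma> = a * ?F x \<sigma> + b * ?F y \<sigma>"
      unfolding KP2[OF \<sigma> i len] by (simp add: form_lin1 form_lin2 algebra_simps)
  qed simp
  also have "\<dots> = a * (\<Sum>\<sigma>\<in>?S. ?F x \<sigma>) + b * (\<Sum>\<sigma>\<in>?S. ?F y \<sigma>)"
    by (simp add: sum.distrib sum_distrib_left)
  finally show ?thesis unfolding P_poly_def by (simp add: algebra_simps)
qed

lemma sum_even_odd: fixes n :: nat and G :: "nat \<Rightarrow> 'a::comm_monoid_add" shows "(\<Sum>t<2*n. G t) = (\<Sum>j<n. G (2*j) + G (2*j+1))"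
  by (induction n) (simp_all add: algebra_simps)

lemma P_inv:
  assumes len: "length zs = 2*n"
  shows "(\<Sum>i<2*n. P_poly n (zs[i := lie y (zs ! i)])) = 0"
proof -
  let ?S = "{\<sigma>. \<sigma> permutes {..<2*n}}"
  let ?F = "\<lambda>i \<sigma>. \<Prod>j<n. form ((zs[i := lie y (zs ! i)]) ! \<sigma> (2*j)) ((zs[i := lie y (zs ! i)]) ! \<sigma> (2*j+1))"
  have "(\<Sum>i<2*n. P_poly n (zs[i := lie y (zs ! i)])) = (1 / of_nat (fact (2*n))) * (\<Sum>\<sigma>\<in>?S. \<Sum>i<2*n. ?F i \<sigma>)"
    unfolding P_poly_def by (simp add: sum_distrib_left sum.swap[of _ ?S])
  also have "(\<Sum>\<sigma>\<in>?S. \<Sum>i<2*n. ?F i \<sigma>) = (\<Sum>\<sigma>\<in>?S. 0)"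
  proof (rule sum.cong)
    fix \<sigma> assume "\<sigma> \<in> ?S"
    then have \<sigma>: "\<sigma> permutes {..<2*n}" by simp
    let ?R = "\<lambda>j. (\<Prod>j'\<in>{..<n}-{j}. form (zs ! \<sigma> (2*j')) (zs ! \<sigma> (2*j'+1)))"
    have "(\<Sum>i<2*n. ?F i \<sigma>) = (\<Sum>t<2*n. ?F (\<sigma> t) \<sigma>)"
      using sum.permute[OF \<sigma>, of "\<lambda>i. ?F i \<sigma>"] by (simp add: o_def)
    also have "\<dots> = (\<Sum>t<2*n. (if even t then form (lie y (zs ! \<sigma> t)) (zs ! \<sigma> (t+1)) else form (zs ! \<sigma> (t-1)) (lie y (zs ! \<sigma> t))) * ?R (t div 2))"
    proof (rule sum.cong)
      fix t assume "t \<in> {..<2*n}"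
      then have t: "t < 2*n" by simp
      show "?F (\<sigma> t) \<sigma> = (if even t then form (lie y (zs ! \<sigma> t)) (zs ! \<sigma> (t+1)) else form (zs ! \<sigma> (t-1)) (lie y (zs ! \<sigma> t))) * ?R (t div 2)"
        by (rule KP[OF \<sigma> t len])
    qed simp
    also have "\<dots> = (\<Sum>j<n. (form (lie y (zs ! \<sigma> (2*j))) (zs ! \<sigma> (2*j+1)) + form (zs ! \<sigma> (2*j)) (lie y (zs ! \<sigma> (2*j+1)))) * ?R j)"
      unfolding sum_even_odd by (simp add: algebra_simps)
    also have "\<dots> = 0" by (simp add: form_inv)
    finally show "(\<Sum>i<2*n. ?F i \<sigma>) = 0" .
  qed simp
  finally show ?thesis by simp
qed

lemma P_sym:
  assumes q: "q permutes {..<2*n}" and len: "length zs = 2*n"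
  shows "P_poly n (permute_list q zs) = P_poly n zs"
proof -
  let ?S = "{\<sigma>. \<sigma> permutes {..<2*n}}"
  let ?H = "\<lambda>\<sigma>. \<Prod>j<n. form (zs ! \<sigma> (2*j)) (zs ! \<sigma> (2*j+1))"
  have "(\<Sum>\<sigma>\<in>?S. \<Prod>j<n. form (permute_list q zs ! \<sigma> (2*j)) (permute_list q zs ! \<sigma> (2*j+1))) = (\<Sum>\<sigma>\<in>?S. ?H (q \<circ> \<sigma>))"
  proof (rule sum.cong)
    fix \<sigma> assume "\<sigma> \<in> ?S"
    then have \<sigma>: "\<sigma> permutes {..<2*n}" by simp
    show "(\<Prod>j<n. form (permute_list q zs ! \<sigma> (2*j)) (permute_list q zs ! \<sigma> (2*j+1))) = ?H (q \<circ> \<sigma>)"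
    proof (rule prod.cong)
      fix j assume "j \<in> {..<n}"
      then have "2*j < 2*n" "2*j+1 < 2*n" by auto
      then have "\<sigma> (2*j) < length zs" "\<sigma> (2*j+1) < length zs" using perm_lt[OF \<sigma>] len by auto
      then show "form (permute_list q zs ! \<sigma> (2*j)) (permute_list q zs ! \<sigma> (2*j+1)) = form (zs ! (q \<circ> \<sigma>) (2*j)) (zs ! (q \<circ> \<sigma>) (2*j+1))"
        using q len by (simp add: permute_list_nth)
    qed simp
  qed simp
  also have "\<dots> = (\<Sum>\<sigma>\<in>?S. ?H \<sigma>)" using setum_permutations_compose_left[OF q, of ?H] by simp
  finally show ?thesis unfolding P_poly_def by simp
qed

lemma P_mset:
  assumes len: "length ys = 2*n" and m: "mset zs = mset ys"
  shows "P_poly n zs = P_poly n ys"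
proof -
  obtain p where p: "p permutes {..<length ys}" "permute_list p ys = zs"
    using mset_eq_permutation[OF m] by blast
  show ?thesis using P_sym[of p n ys] p len by simp
qed

lemma P_h: "P_poly n (replicate (2*n) Hh) = 4^n"
proof -
  let ?S = "{\<sigma>. \<sigma> permutes {..<2*n}}"
  have "(\<Sum>\<sigma>\<in>?S. \<Prod>j<n. form (replicate (2*n) Hh ! \<sigma> (2*j)) (replicate (2*n) Hh ! \<sigma> (2*j+1))) = (\<Sum>\<sigma>\<in>?S. 4^n)"
  proof (rule sum.cong)
    fix \<sigma> assume "\<sigma> \<in> ?S"
    then have \<sigma>: "\<sigma> permutes {..<2*n}" by simp
    have "(\<Prod>j<n. form (replicate (2*n) Hh ! \<sigma> (2*j)) (replicate (2*n) Hh ! \<sigma> (2*j+1))) = (\<Prod>j<n. (4::complex))"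
    proof (rule prod.cong)
      fix j assume "j \<in> {..<n}"
      then have "\<sigma> (2*j) < 2*n" "\<sigma> (2*j+1) < 2*n" using perm_lt[OF \<sigma>] by auto
      then show "form (replicate (2*n) Hh ! \<sigma> (2*j)) (replicate (2*n) Hh ! \<sigma> (2*j+1)) = 4"
        by (simp add: form_HH)
    qed simp
    then show "(\<Prod>j<n. form (replicate (2*n) Hh ! \<sigma> (2*j)) (replicate (2*n) Hh ! \<sigma> (2*j+1))) = 4^n" by simp
  qed simp
  moreover have "card ?S = fact (2*n)" by (rule card_permutations) simp_all
  ultimately show ?thesis unfolding P_poly_def by simp
qed


definition rmv :: "nat \<Rightarrow> 'a list \<Rightarrow> 'a list" where
  "rmv k xs = take k xs @ drop (Suc k) xs"

lemma rmv_len[simp]: "k < length xs \<Longrightarrow> length (rmv k xs) = length xs - 1"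
  by (simp add: rmv_def)
lemma rmv_nth: "k < length xs \<Longrightarrow> j < length xs - 1 \<Longrightarrow> rmv k xs ! j = (if j < k then xs ! j else xs ! Suc j)"
  by (auto simp: rmv_def nth_append min_def)
lemma mset_rmv: "k < length xs \<Longrightarrow> mset (rmv k xs) = mset xs - {#xs ! k#}"
proof -
  assume k: "k < length xs"
  have "mset xs = mset (take k xs @ xs ! k # drop (Suc k) xs)" using id_take_nth_drop[OF k] by simp
  then show ?thesis by (simp add: rmv_def)
qed
lemma rmv_upd_same: "k < length xs \<Longrightarrow> rmv k (xs[k := z]) = rmv k xs"
  by (rule nth_equalityI) (auto simp: rmv_nth)
lemma rmv_upd_other: "k < length xs \<Longrightarrow> i < length xs \<Longrightarrow> i \<noteq> k \<Longrightarrow>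
   rmv k (xs[i := z]) = (rmv k xs)[(if i < k then i else i - 1) := z]"
  by (rule nth_equalityI) (auto simp: rmv_nth nth_list_update)

lemma B_g_eq: "xs \<in> dom_g (2*n+1) \<Longrightarrow> B_g n xs = (\<Sum>k<2*n+1. smul (P_poly n (rmv k xs)) (xs ! k))"
  by (simp add: B_g_def rmv_def)

lemma dom_len: "xs \<in> dom_g m \<Longrightarrow> length xs = m" by (simp add: dom_g_def)

lemma smul_lin_aux: "smul p (smul a x + smul b y) = smul a (smul p x) + smul b (smul p y)"
  by (simp add: mat_eq algebra_simps)
lemma smul_lin_aux2: "smul (a * p1 + b * p2) v = smul a (smul p1 v) + smul b (smul p2 v)"
  by (simp add: mat_eq algebra_simps)
lemma lie_smul: "lie y (smul c v) = smul c (lie y v)"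
  by (simp add: mat_eq algebra_simps)

lemma Bg_lin:
  assumes d: "xs \<in> dom_g (2*n+1)" and i: "i < 2*n+1" and x: "x \<in> sl2" and y: "y \<in> sl2"
  shows "B_g n (xs[i := smul a x + smul b y]) = smul a (B_g n (xs[i := x])) + smul b (B_g n (xs[i := y]))"
proof -
  let ?z = "smul a x + smul b y"
  have len: "length xs = 2*n+1" using dom_len[OF d] .
  have dz: "xs[i := ?z] \<in> dom_g (2*n+1)" using dom_upd[OF d] x y by simp
  have dx: "xs[i := x] \<in> dom_g (2*n+1)" using dom_upd[OF d] x by simp
  have dy: "xs[i := y] \<in> dom_g (2*n+1)" using dom_upd[OF d] y by simp
  have "(\<Sum>k<2*n+1. smul (P_poly n (rmv k (xs[i := ?z]))) (xs[i := ?z] ! k)) =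
        (\<Sum>k<2*n+1. smul a (smul (P_poly n (rmv k (xs[i := x]))) (xs[i := x] ! k)) + smul b (smul (P_poly n (rmv k (xs[i := y]))) (xs[i := y] ! k)))"
  proof (rule sum.cong)
    fix k assume "k \<in> {..<2*n+1}"
    then have k: "k < 2*n+1" by simp
    show "smul (P_poly n (rmv k (xs[i := ?z]))) (xs[i := ?z] ! k) =
        smul a (smul (P_poly n (rmv k (xs[i := x]))) (xs[i := x] ! k)) + smul b (smul (P_poly n (rmv k (xs[i := y]))) (xs[i := y] ! k))"
    proof (cases "k = i")
      case True
      then show ?thesis using len k by (simp add: rmv_upd_same smul_lin_aux)
    next
      case False
      let ?i' = "if i < k then i else i - 1"
      have i': "?i' < 2*n" using i k False by auto
      have lr: "length (rmv k xs) = 2*n" using len k by simp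
      have "P_poly n (rmv k (xs[i := ?z])) = a * P_poly n (rmv k (xs[i := x])) + b * P_poly n (rmv k (xs[i := y]))"
        using P_lin[OF i' lr] len k i False by (simp add: rmv_upd_other)
      then show ?thesis using False by (simp add: smul_lin_aux2)
    qed
  qed simp
  also have "\<dots> = smul a (\<Sum>k<2*n+1. smul (P_poly n (rmv k (xs[i := x]))) (xs[i := x] ! k)) + smul b (\<Sum>k<2*n+1. smul (P_poly n (rmv k (xs[i := y]))) (xs[i := y] ! k))"
    by (simp only: smul_sum sum.distrib)
  finally show ?thesis using dz dx dy by (simp add: B_g_eq del: sum.lessThan_Suc)
qed

lemma Bg_perm:
  assumes d: "xs \<in> dom_g (2*n+1)" and p: "p permutes {..<2*n+1}"
  shows "B_g n (map (\<lambda>i. xs ! p i) [0..<2*n+1]) = B_g n xs"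
proof -
  let ?ys = "map (\<lambda>i. xs ! p i) [0..<2*n+1]"
  have len: "length xs = 2*n+1" using dom_len[OF d] .
  have ys: "?ys = permute_list p xs" using len by (simp add: permute_list_def)
  have dys: "?ys \<in> dom_g (2*n+1)" using d perm_lt[OF p] by (auto simp: dom_g_def)
  let ?g = "\<lambda>k. smul (P_poly n (rmv k xs)) (xs ! k)"
  have "(\<Sum>k<2*n+1. smul (P_poly n (rmv k ?ys)) (?ys ! k)) = (\<Sum>k<2*n+1. ?g (p k))"
  proof (rule sum.cong)
    fix k assume "k \<in> {..<2*n+1}"
    then have k: "k < 2*n+1" by simp
    have pk: "p k < 2*n+1" using perm_lt[OF p k] .
    have nth: "?ys ! k = xs ! p k" using k by (simp del: upt_Suc)
    have "mset (rmv k ?ys) = mset (rmv (p k) xs)"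
      using k pk len p unfolding ys by (simp add: mset_rmv permute_list_nth)
    then have "P_poly n (rmv k ?ys) = P_poly n (rmv (p k) xs)"
      by (rule P_mset[rotated]) (use pk len in simp)
    then show "smul (P_poly n (rmv k ?ys)) (?ys ! k) = ?g (p k)" using nth by simp
  qed simp
  also have "\<dots> = (\<Sum>k<2*n+1. ?g k)" using sum.permute[OF p, of ?g] by (simp add: o_def)
  finally show ?thesis using d dys by (simp add: B_g_eq)
qed

lemma Bg_inv:
  assumes d: "xs \<in> dom_g (2*n+1)" and y: "y \<in> sl2"
  shows "lie y (B_g n xs) = (\<Sum>i<2*n+1. B_g n (xs[i := lie y (xs ! i)]))"
proof -
  have len: "length xs = 2*n+1" using dom_len[OF d] .
  let ?T = "\<lambda>i k. smul (P_poly n (rmv k (xs[i := lie y (xs ! i)]))) (xs[i := lie y (xs ! i)] ! k)"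
  have "(\<Sum>i<2*n+1. B_g n (xs[i := lie y (xs ! i)])) = (\<Sum>i<2*n+1. \<Sum>k<2*n+1. ?T i k)"
  proof (rule sum.cong)
    fix i assume "i \<in> {..<2*n+1}"
    have "xs[i := lie y (xs ! i)] \<in> dom_g (2*n+1)" by (rule dom_upd[OF d]) simp
    then show "B_g n (xs[i := lie y (xs ! i)]) = (\<Sum>k<2*n+1. ?T i k)" by (rule B_g_eq)
  qed simp
  also have "\<dots> = (\<Sum>k<2*n+1. \<Sum>i<2*n+1. ?T i k)" by (rule sum.swap)
  also have "\<dots> = (\<Sum>k<2*n+1. smul (P_poly n (rmv k xs)) (lie y (xs ! k)))"
  proof (rule sum.cong)
    fix k assume "k \<in> {..<2*n+1}"
    then have k: "k < 2*n+1" by simp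
    let ?zs = "rmv k xs"
    have lz: "length ?zs = 2*n" using len k by simp
    have "(\<Sum>i<2*n+1. ?T i k) = ?T k k + (\<Sum>i\<in>{..<2*n+1}-{k}. ?T i k)"
      by (rule sum.remove) (use k in auto)
    also have "?T k k = smul (P_poly n (rmv k xs)) (lie y (xs ! k))"
      using k len by (simp add: rmv_upd_same)
    also have "(\<Sum>i\<in>{..<2*n+1}-{k}. ?T i k) = (\<Sum>i\<in>{..<2*n+1}-{k}. smul (P_poly n (?zs[(if i < k then i else i - 1) := lie y (?zs ! (if i < k then i else i - 1))])) (xs ! k))"
    proof (rule sum.cong)
      fix i assume "i \<in> {..<2*n+1}-{k}"
      then have i: "i < 2*n+1" "i \<noteq> k" by auto
      have "?zs ! (if i < k then i else i - 1) = xs ! i"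
        using i k len by (auto simp: rmv_nth)
      then show "?T i k = smul (P_poly n (?zs[(if i < k then i else i - 1) := lie y (?zs ! (if i < k then i else i - 1))])) (xs ! k)"
        using i k len by (simp add: rmv_upd_other)
    qed simp
    also have "\<dots> = smul (\<Sum>i\<in>{..<2*n+1}-{k}. P_poly n (?zs[(if i < k then i else i - 1) := lie y (?zs ! (if i < k then i else i - 1))])) (xs ! k)"
      by (rule sum_smul_left)
    also have "(\<Sum>i\<in>{..<2*n+1}-{k}. P_poly n (?zs[(if i < k then i else i - 1) := lie y (?zs ! (if i < k then i else i - 1))]))
        = (\<Sum>i'<2*n. P_poly n (?zs[i' := lie y (?zs ! i')]))"
      by (rule sum.reindex_bij_witness[where i = "\<lambda>i'. if i' < k then i' else i' + 1" and j = "\<lambda>i. if i < k then i else i - 1"])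
         (use k in auto)
    also have "\<dots> = 0" by (rule P_inv[OF lz])
    finally show "(\<Sum>i<2*n+1. ?T i k) = smul (P_poly n (rmv k xs)) (lie y (xs ! k))" by simp
  qed simp
  also have "\<dots> = lie y (B_g n xs)"
    using d by (simp add: B_g_eq lie_sum lie_smul del: sum.lessThan_Suc)
  finally show ?thesis by simp
qed

lemma Bg_S: "B_g n \<in> S_inv (2*n+1)"
  unfolding S_inv_def
proof (intro CollectI conjI ballI allI impI)
  fix xs :: "mat2 list" assume "xs \<notin> dom_g (2*n+1)"
  then show "B_g n xs = 0" by (simp add: B_g_def)
next
  fix xs assume d: "xs \<in> dom_g (2*n+1)"
  then show "B_g n xs \<in> sl2" unfolding B_g_eq[OF d]
    by (intro sum_sl2 smul_sl2 dom_nth[OF d]) auto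
next
  fix xs i x y a b assume "xs \<in> dom_g (2*n+1)" "i < 2*n+1" "x \<in> sl2" "y \<in> sl2"
  then show "B_g n (xs[i := smul a x + smul b y]) = smul a (B_g n (xs[i := x])) + smul b (B_g n (xs[i := y]))"
    by (rule Bg_lin)
next
  fix xs p assume "xs \<in> dom_g (2*n+1)" "p permutes {..<2*n+1}"
  then show "B_g n (map (\<lambda>i. xs ! p i) [0..<2*n+1]) = B_g n xs" by (rule Bg_perm)
next
  fix xs y assume "xs \<in> dom_g (2*n+1)" "y \<in> sl2"
  then show "lie y (B_g n xs) = (\<Sum>i<2*n+1. B_g n (xs[i := lie y (xs ! i)]))" by (rule Bg_inv)
qed

lemma Bg_h: "B_g n (blk 0 0 (2*n+1)) = smul (of_nat (2*n+1) * 4^n) Hh"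
proof -
  have d: "blk 0 0 (2*n+1) \<in> dom_g (2*n+1)" by (rule blk_dom) simp
  have "B_g n (blk 0 0 (2*n+1)) = (\<Sum>k<2*n+1. smul (4^n) Hh)"
  proof -
    have "(\<Sum>k<2*n+1. smul (P_poly n (rmv k (blk 0 0 (2*n+1)))) (blk 0 0 (2*n+1) ! k)) = (\<Sum>k<2*n+1. smul (4^n) Hh)"
    proof (rule sum.cong)
      fix k assume "k \<in> {..<2*n+1}"
      then have k: "k < 2*n+1" by simp
      have "rmv k (blk 0 0 (2*n+1)) = replicate (2*n) Hh"
        using k by (intro nth_equalityI) (simp_all add: rmv_nth blk_def del: replicate_Suc)
      then show "smul (P_poly n (rmv k (blk 0 0 (2*n+1)))) (blk 0 0 (2*n+1) ! k) = smul (4^n) Hh"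
        using k by (simp add: P_h blk_def del: replicate_Suc)
    qed simp
    then show ?thesis using d by (simp add: B_g_eq)
  qed
  also have "\<dots> = smul (of_nat (2*n+1) * 4^n) Hh" by (simp del: sum_constant add: sum_const_mat)
  finally show ?thesis .
qed


lemma S_zero: "(\<lambda>_. 0) \<in> S_inv m"
  unfolding S_inv_def by simp

lemma S_lincomb:
  assumes B1: "B1 \<in> S_inv m" and B2: "B2 \<in> S_inv m"
  shows "(\<lambda>xs. smul c1 (B1 xs) + smul c2 (B2 xs)) \<in> S_inv m"
  unfolding S_inv_def
proof (intro CollectI conjI ballI allI impI)
  fix xs :: "mat2 list" assume "xs \<notin> dom_g m"
  then show "smul c1 (B1 xs) + smul c2 (B2 xs) = 0" using B_out[OF B1] B_out[OF B2] by simp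
next
  fix xs assume d: "xs \<in> dom_g m"
  then show "smul c1 (B1 xs) + smul c2 (B2 xs) \<in> sl2" using B_sl2[OF B1 d] B_sl2[OF B2 d] by simp
next
  fix xs i x y a b assume h: "xs \<in> dom_g m" "i < m" "x \<in> sl2" "y \<in> sl2"
  show "smul c1 (B1 (xs[i := smul a x + smul b y])) + smul c2 (B2 (xs[i := smul a x + smul b y])) =
        smul a (smul c1 (B1 (xs[i := x])) + smul c2 (B2 (xs[i := x]))) + smul b (smul c1 (B1 (xs[i := y])) + smul c2 (B2 (xs[i := y])))"
    unfolding B_lin[OF B1 h] B_lin[OF B2 h] by (simp add: mat_eq algebra_simps)
next
  fix xs p assume "xs \<in> dom_g m" "p permutes {..<m}"
  then show "smul c1 (B1 (map (\<lambda>i. xs ! p i) [0..<m])) + smul c2 (B2 (map (\<lambda>i. xs ! p i) [0..<m])) = smul c1 (B1 xs) + smul c2 (B2 xs)"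
    using B_perm[OF B1] B_perm[OF B2] by simp
next
  fix xs y assume h: "xs \<in> dom_g m" "y \<in> sl2"
  have "lie y (smul c1 (B1 xs) + smul c2 (B2 xs)) = smul c1 (lie y (B1 xs)) + smul c2 (lie y (B2 xs))"
    by (simp add: lie_add lie_smul)
  also have "\<dots> = smul c1 (\<Sum>i<m. B1 (xs[i := lie y (xs ! i)])) + smul c2 (\<Sum>i<m. B2 (xs[i := lie y (xs ! i)]))"
    using B_inv[OF B1 h] B_inv[OF B2 h] by simp
  also have "\<dots> = (\<Sum>i<m. smul c1 (B1 (xs[i := lie y (xs ! i)])) + smul c2 (B2 (xs[i := lie y (xs ! i)])))"
    by (simp only: smul_sum sum.distrib)
  finally show "lie y (smul c1 (B1 xs) + smul c2 (B2 xs)) = (\<Sum>i<m. smul c1 (B1 (xs[i := lie y (xs ! i)])) + smul c2 (B2 (xs[i := lie y (xs ! i)])))" .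
qed

lemma S_trivial: assumes BS: "B \<in> S_inv m" and h: "B (blk 0 0 m) = 0" shows "B = (\<lambda>_. 0)"
proof
  fix xs
  show "B xs = 0"
    by (rule B_all_zero[OF BS]) (rule W_unique[OF BS h])
qed

theorem theorem5:
  fixes n :: nat
  assumes "n \<ge> 1"
  shows "S_inv (2*n) = {\<lambda>_. 0} \<and> S_inv (2*n+1) = {B. \<exists>c. B = (\<lambda>xs. smul c (B_g n xs))}"
proof
  show "S_inv (2*n) = {\<lambda>_. 0}"
  proof
    show "S_inv (2*n) \<subseteq> {\<lambda>_. 0}"
    proof
      fix B assume BS: "B \<in> S_inv (2*n)"
      have "B (blk 0 0 (2*n)) = 0" by (rule W_even[OF BS refl assms])
      then show "B \<in> {\<lambda>_. 0}" using S_trivial[OF BS] by simp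
    qed
  next
    show "{\<lambda>_. 0} \<subseteq> S_inv (2*n)" using S_zero by simp
  qed
next
  show "S_inv (2*n+1) = {B. \<exists>c. B = (\<lambda>xs. smul c (B_g n xs))}"
  proof
    show "S_inv (2*n+1) \<subseteq> {B. \<exists>c. B = (\<lambda>xs. smul c (B_g n xs))}"
    proof
      fix B assume BS: "B \<in> S_inv (2*n+1)"
      define g :: complex where "g = of_nat (2*n+1) * 4^n"
      have g0: "g \<noteq> 0" unfolding g_def by (simp del: of_nat_Suc)
      define \<gamma> where "\<gamma> = (B (blk 0 0 (2*n+1)))$1$1"
      define c where "c = \<gamma> / g"
      let ?D = "\<lambda>xs. smul 1 (B xs) + smul (-c) (B_g n xs)"
      have DS: "?D \<in> S_inv (2*n+1)" by (rule S_lincomb[OF BS Bg_S])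
      have "?D (blk 0 0 (2*n+1)) = smul \<gamma> Hh + smul (-c) (smul g Hh)"
        using W00[OF BS] Bg_h[of n] by (simp add: \<gamma>_def g_def)
      also have "\<dots> = 0" using g0 by (simp add: mat_eq c_def)
      finally have "?D = (\<lambda>_. 0)" by (rule S_trivial[OF DS])
      then have "B = (\<lambda>xs. smul c (B_g n xs))"
        by (auto simp: fun_eq_iff mat_eq algebra_simps dest!: fun_cong)
      then show "B \<in> {B. \<exists>c. B = (\<lambda>xs. smul c (B_g n xs))}" by blast
    qed
  next
    show "{B. \<exists>c. B = (\<lambda>xs. smul c (B_g n xs))} \<subseteq> S_inv (2*n+1)"
    proof
      fix B assume "B \<in> {B. \<exists>c. B = (\<lambda>xs. smul c (B_g n xs))}"
      then obtain c where B: "B = (\<lambda>xs. smul c (B_g n xs))" by blast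
      have "(\<lambda>xs. smul c (B_g n xs) + smul 0 (B_g n xs)) \<in> S_inv (2*n+1)"
        by (rule S_lincomb[OF Bg_S Bg_S])
      then show "B \<in> S_inv (2*n+1)" unfolding B by simp
    qed
  qed
qed

end
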